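(* Let $M$ be the monoid defined by the presentation $\langle a,b,x,y \mid bxy=xyb,\ byx=yxb,\ axyb=byxa\rangle$. Then for every $\alpha\in\mathbb{N}$, the elements represented by $a(xy)^\alpha b$ and $b(yx)^\alpha a$ lie in the same connected component of the cyclic shift graph $K(M)$, and the distance between them in $K(M)$ is at least $\alpha-1$. Consequently, although $M$ is multihomogeneous, there is no bound on the diameters of the connected components of $K(M)$.
   Context: For a monoid $M$ and $s,t\in M$, write $s\sim t$ if there exist $x,y\in M$ with $s=xy$ and $t=yx$ (a cyclic shift). The cyclic shift graph $K(M)$ is the undirected graph with vertex set $M$ and an edge between $s$ and $t$ iff $s\sim t$; its connected components are the classes of the reflexive–transitive closure of $\sim$, and distances/diameters are graph distances. A presentation is multihomogeneous if each defining relation $(u,v)$ has $u$ and $v$ containing the same number of occurrences of each generator; a monoid is multihomogeneous if it admits such a presentation. *)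

theory Defs
  imports "HOL-Library.Extended_Nat"
begin

definition cyc_shift :: "'a::monoid_mult \<Rightarrow> 'a \<Rightarrow> bool" where
  "cyc_shift s t \<longleftrightarrow> (\<exists>x y. s = x * y \<and> t = y * x)"

definition K_conn :: "'a::monoid_mult \<Rightarrow> 'a \<Rightarrow> bool" where
  "K_conn s t \<longleftrightarrow> cyc_shift\<^sup>*\<^sup>* s t"

text \<open>Graph distance in K(M) (infinite if not connected).\<close>
definition K_dist :: "'a::monoid_mult \<Rightarrow> 'a \<Rightarrow> enat" where
  "K_dist s t = (INF n \<in> {n. (cyc_shift ^^ n) s t}. enat n)"

definition K_comp_diam :: "'a::monoid_mult \<Rightarrow> enat" where
  "K_comp_diam s = (SUP p \<in> {u. K_conn s u} \<times> {u. K_conn s u}. K_dist (fst p) (snd p))"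

datatype gen = A | B | X | Y

definition rels :: "(gen list \<times> gen list) set" where
  "rels = {([B,X,Y],[X,Y,B]), ([B,Y,X],[Y,X,B]), ([A,X,Y,B],[B,Y,X,A])}"

definition multihomogeneous_pres :: "('g list \<times> 'g list) set \<Rightarrow> bool" where
  "multihomogeneous_pres R \<longleftrightarrow> (\<forall>(u,v)\<in>R. \<forall>g. count_list u g = count_list v g)"

inductive pcong :: "gen list \<Rightarrow> gen list \<Rightarrow> bool" where
  rel: "(u, v) \<in> rels \<Longrightarrow> pcong (p @ u @ q) (p @ v @ q)"
| refl: "pcong u u"
| sym: "pcong u v \<Longrightarrow> pcong v u"
| trans: "pcong u v \<Longrightarrow> pcong v w \<Longrightarrow> pcong u w"

lemma pcong_equivp: "equivp pcong"
  by (intro equivpI reflpI sympI transpI) (auto intro: pcong.intros)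

lemma pcong_append_left: "pcong u v \<Longrightarrow> pcong (p @ u) (p @ v)"
  by (induction rule: pcong.induct)
     (auto intro: pcong.intros simp del: append_assoc simp: append_assoc[symmetric]
           dest: pcong.rel[where p = "p @ _"])

lemma pcong_append_right: "pcong u v \<Longrightarrow> pcong (u @ q) (v @ q)"
  by (induction rule: pcong.induct) (auto intro: pcong.intros dest: pcong.rel[where q = "_ @ q"])

lemma pcong_append: "pcong u v \<Longrightarrow> pcong u' v' \<Longrightarrow> pcong (u @ u') (v @ v')"
  by (meson pcong.trans pcong_append_left pcong_append_right)

quotient_type pm = "gen list" / pcong
  by (rule pcong_equivp)

instantiation pm :: monoid_mult
begin
lift_definition one_pm :: pm is "[]" .
lift_definition times_pm :: "pm \<Rightarrow> pm \<Rightarrow> pm" is "(@)"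
  by (rule pcong_append)
instance
  by standard (transfer; simp add: pcong.refl)+
end

lift_definition letter :: "gen \<Rightarrow> pm" is "\<lambda>g. [g]" .

end

theory Submission
  imports Defs
begin

fun pc :: "gen list \<Rightarrow> nat" where
  "pc (u#v#r) = (if u = Y \<and> v = X then 1 else 0) + pc r"
| "pc _ = 0"

lemma pc_append: "even (length xs) \<Longrightarrow> pc (xs @ ys) = pc xs + pc ys"
  by (induction xs rule: pc.induct) auto

definition xyf :: "gen list \<Rightarrow> gen list" where
  "xyf w = filter (\<lambda>g. g = X \<or> g = Y) w"

definition fcond :: "gen list \<Rightarrow> bool" where
  "fcond w \<longleftrightarrow> count_list w A = 1 \<and> count_list w B = 1 \<and> even (length w)"

definition f :: "gen list \<Rightarrow> int" where
  "f w = (if fcond w then int (pc (xyf (tl (dropWhile (\<lambda>g. g \<noteq> A) w) @ takeWhile (\<lambda>g. g \<noteq> A) w)))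
            - (if B \<in> set (takeWhile (\<lambda>g. g \<noteq> A) w) then 1 else 0) else 0)"

lemma tw_A: "A \<notin> set s \<Longrightarrow> takeWhile (\<lambda>g. g \<noteq> A) (s @ A # t) = s"
  by (induction s) auto

lemma dw_A: "A \<notin> set s \<Longrightarrow> dropWhile (\<lambda>g. g \<noteq> A) (s @ A # t) = A # t"
  by (induction s) auto

lemma fA: "A \<notin> set s \<Longrightarrow> f (s @ A # t) = (if fcond (s @ A # t) then int (pc (xyf (t @ s)))
            - (if B \<in> set s then 1 else 0) else 0)"
  unfolding f_def by (simp add: tw_A dw_A)

lemma count_notin: "count_list w g = 0 \<longleftrightarrow> g \<notin> set w"
  by (induction w) auto

lemma gen_cases: "g \<noteq> A \<Longrightarrow> g \<noteq> B \<Longrightarrow> g = X \<or> g = Y"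
  by (cases g) auto

lemma xyf_id: assumes "A \<notin> set w" "B \<notin> set w" shows "xyf w = w"
  proof -
  have "\<forall>g\<in>set w. g = X \<or> g = Y"
  proof
    fix g assume "g \<in> set w"
    then have "g \<noteq> A" "g \<noteq> B" using assms by auto
    then show "g = X \<or> g = Y" by (rule gen_cases)
  qed
  then show ?thesis unfolding xyf_def by simp
qed

lemma fcond_rot: "fcond (p @ q) = fcond (q @ p)"
  unfolding fcond_def by auto

lemma A_split:
  assumes "count_list w A = 1"
  obtains s t where "w = s @ A # t" "A \<notin> set s" "A \<notin> set t"
proof -
  have "A \<in> set w" using assms count_notin[of w A] by auto
  then obtain s t where w: "w = s @ A # t" "A \<notin> set s" by (meson split_list_first)
  then have "count_list t A = 0" using assms by simp
  then have "A \<notin> set t" by (simp add: count_notin)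
  then show ?thesis using that w by blast
qed

lemma ind_le: "\<bar>((P::int) - (if b1 then 1 else 0)) - (P - (if b2 then 1 else 0))\<bar> \<le> 1"
  by auto

lemma f_rot: "\<bar>f (p @ q) - f (q @ p)\<bar> \<le> 1"
proof (cases "fcond (p @ q)")
  case False
  then show ?thesis unfolding f_def using fcond_rot by simp
next
  case True
  have T2: "fcond (q @ p)" using True fcond_rot by blast
  then have c: "count_list (p @ q) A = 1" using True unfolding fcond_def by simp
  then obtain s t where w: "p @ q = s @ A # t" "A \<notin> set s" "A \<notin> set t" by (rule A_split)
  show ?thesis
  proof (cases "A \<in> set p")
    case True
    then obtain s1 t1 where p: "p = s1 @ A # t1" "A \<notin> set s1" by (meson split_list_first)
    have "A \<notin> set q" using c p by (auto simp: count_notin[symmetric])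
    have e1: "p @ q = s1 @ A # (t1 @ q)" using p by simp
    have e2: "q @ p = (q @ s1) @ A # t1" using p by simp
    have "f (p @ q) = int (pc (xyf (t1 @ q @ s1))) - (if B \<in> set s1 then 1 else 0)"
      using fA[of s1 "t1 @ q"] p(2) \<open>fcond (p @ q)\<close> e1 by simp
    moreover have "f (q @ p) = int (pc (xyf (t1 @ q @ s1))) - (if B \<in> set (q @ s1) then 1 else 0)"
      using fA[of "q @ s1" t1] p(2) \<open>A \<notin> set q\<close> T2 e2 by simp
    ultimately show ?thesis using ind_le by presburger
  next
    case False
    then have "A \<in> set q" using w by (metis Un_iff list.set_intros(1) set_append)
    then obtain s1 t1 where q: "q = s1 @ A # t1" "A \<notin> set s1" by (meson split_list_first)
    have e1: "p @ q = (p @ s1) @ A # t1" using q by simp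
    have e2: "q @ p = s1 @ A # (t1 @ p)" using q by simp
    have "f (p @ q) = int (pc (xyf (t1 @ p @ s1))) - (if B \<in> set (p @ s1) then 1 else 0)"
      using fA[of "p @ s1" t1] q(2) False \<open>fcond (p @ q)\<close> e1 by simp
    moreover have "f (q @ p) = int (pc (xyf (t1 @ p @ s1))) - (if B \<in> set s1 then 1 else 0)"
      using fA[of s1 "t1 @ p"] q(2) T2 e2 by simp
    ultimately show ?thesis using ind_le by presburger
  qed
qed


lemma fcond_eq:
  assumes "\<And>g. count_list u g = count_list v g" "length u = length v"
  shows "fcond (p @ u @ q) = fcond (p @ v @ q)"
  using assms unfolding fcond_def by simp

lemma f_hop:
  assumes "A \<notin> set u" "A \<notin> set v" "xyf u = xyf v" "B \<in> set u \<longleftrightarrow> B \<in> set v"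
    "\<And>g. count_list u g = count_list v g" "length u = length v"
  shows "f (p @ u @ q) = f (p @ v @ q)"
proof (cases "fcond (p @ u @ q)")
  case False
  then show ?thesis using fcond_eq[OF assms(5,6)] unfolding f_def by simp
next
  case True
  have T2: "fcond (p @ v @ q)" using True fcond_eq[OF assms(5,6)] by simp
  have "A \<in> set (p @ u @ q)" using True unfolding fcond_def using count_notin[of "p @ u @ q" A] by auto
  then have "A \<in> set p \<or> A \<in> set q" using assms(1) by auto
  then show ?thesis
  proof
    assume "A \<in> set p"
    then obtain s t where p: "p = s @ A # t" "A \<notin> set s" by (meson split_list_first)
    have "f (p @ u @ q) = int (pc (xyf (t @ u @ q @ s))) - (if B \<in> set s then 1 else 0)"
      using fA[of s "t @ u @ q"] p True by simp
    moreover have "f (p @ v @ q) = int (pc (xyf (t @ v @ q @ s))) - (if B \<in> set s then 1 else 0)"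
      using fA[of s "t @ v @ q"] p T2 by simp
    moreover have "xyf (t @ u @ q @ s) = xyf (t @ v @ q @ s)" using assms(3) by (simp add: xyf_def)
    ultimately show ?thesis by simp
  next
    assume "A \<in> set q"
    then obtain s t where q: "q = s @ A # t" "A \<notin> set s" by (meson split_list_first)
    have "A \<notin> set p" using True q unfolding fcond_def by (auto simp: count_notin[symmetric])
    have "f (p @ u @ q) = int (pc (xyf (t @ p @ u @ s))) - (if B \<in> set (p @ u @ s) then 1 else 0)"
      using fA[of "p @ u @ s" t] q True assms(1) \<open>A \<notin> set p\<close> by simp
    moreover have "f (p @ v @ q) = int (pc (xyf (t @ p @ v @ s))) - (if B \<in> set (p @ v @ s) then 1 else 0)"
      using fA[of "p @ v @ s" t] q T2 assms(2) \<open>A \<notin> set p\<close> by simp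
    moreover have "xyf (t @ p @ u @ s) = xyf (t @ p @ v @ s)" using assms(3) by (simp add: xyf_def)
    ultimately show ?thesis using assms(4) by simp
  qed
qed

lemma f_swap: "f (p @ [A,X,Y,B] @ q) = f (p @ [B,Y,X,A] @ q)"
proof (cases "fcond (p @ [A,X,Y,B] @ q)")
  case False
  then show ?thesis using fcond_eq[of "[A,X,Y,B]" "[B,Y,X,A]" p q] unfolding f_def by simp
next
  case True
  have T2: "fcond (p @ [B,Y,X,A] @ q)" using True fcond_eq[of "[A,X,Y,B]" "[B,Y,X,A]" p q] by simp
  from True have cA: "count_list p A + count_list q A = 0" and cB: "count_list p B + count_list q B = 0"
    and ev: "even (length p + length q)" unfolding fcond_def by auto
  then have nA: "A \<notin> set p" "A \<notin> set q" and nB: "B \<notin> set p" "B \<notin> set q"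
    using cA cB by (auto simp: count_notin[symmetric])
  have xq: "xyf (q @ p) = q @ p" using nA nB by (intro xyf_id) auto
  have "f (p @ [A,X,Y,B] @ q) = int (pc (xyf ([X,Y,B] @ q @ p))) - (if B \<in> set p then 1 else 0)"
    using fA[of p "[X,Y,B] @ q"] nA True by simp
  also have "\<dots> = int (pc (q @ p))" using nB xq by (simp add: xyf_def)
  finally have 1: "f (p @ [A,X,Y,B] @ q) = int (pc (q @ p))" .
  have "f (p @ [B,Y,X,A] @ q) = int (pc (xyf (q @ p @ [B,Y,X]))) - (if B \<in> set (p @ [B,Y,X]) then 1 else 0)"
    using fA[of "p @ [B,Y,X]" q] nA T2 by simp
  also have "xyf (q @ p @ [B,Y,X]) = (q @ p) @ [Y,X]" using xq by (simp add: xyf_def)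
  also have "pc ((q @ p) @ [Y,X]) = pc (q @ p) + 1" using ev pc_append[of "q @ p" "[Y,X]"] by simp
  finally have 2: "f (p @ [B,Y,X,A] @ q) = int (pc (q @ p))" by simp
  show ?thesis using 1 2 by simp
qed

lemma f_pcong: "pcong u v \<Longrightarrow> f u = f v"
proof (induction rule: pcong.induct)
  case (rel u v p q)
  then have "(u = [B,X,Y] \<and> v = [X,Y,B]) \<or> (u = [B,Y,X] \<and> v = [Y,X,B]) \<or> (u = [A,X,Y,B] \<and> v = [B,Y,X,A])"
    unfolding rels_def by auto
  then show ?case
  proof (elim disjE conjE)
    assume "u = [A,X,Y,B]" "v = [B,Y,X,A]" then show ?thesis using f_swap by simp
  next
    assume "u = [B,X,Y]" "v = [X,Y,B]" then show ?thesis by (intro f_hop) (auto simp: xyf_def)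
  next
    assume "u = [B,Y,X]" "v = [Y,X,B]" then show ?thesis by (intro f_hop) (auto simp: xyf_def)
  qed
qed auto

lift_definition F :: "pm \<Rightarrow> int" is f by (rule f_pcong)

lemma F_shift: "cyc_shift s t \<Longrightarrow> \<bar>F s - F t\<bar> \<le> 1"
  unfolding cyc_shift_def
proof (elim exE conjE)
  fix x y assume "s = x * y" "t = y * x"
  moreover have "\<bar>F (x * y) - F (y * x)\<bar> \<le> 1" by transfer (rule f_rot)
  ultimately show ?thesis by simp
qed

lemma F_pow: "(cyc_shift ^^ n) s t \<Longrightarrow> \<bar>F s - F t\<bar> \<le> int n"
proof (induction n arbitrary: t)
  case 0
  then show ?case by simp
next
  case (Suc n)
  then obtain u where "(cyc_shift ^^ n) s u" "cyc_shift u t" by auto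
  then show ?case using Suc.IH F_shift[of u t] by fastforce
qed


lemma letter_abs: "letter g = abs_pm [g]"
  by (simp add: letter_def)

lemma times_abs: "abs_pm u * abs_pm v = abs_pm (u @ v)"
  by (simp add: times_pm.abs_eq)

lemma one_abs: "(1::pm) = abs_pm []"
  by (simp add: one_pm_def)

lemma pow_abs: "(abs_pm w) ^ n = abs_pm (concat (replicate n w))"
  by (induction n) (simp_all add: one_abs times_abs)

lemma rel_pm: "(u, v) \<in> rels \<Longrightarrow> abs_pm u = abs_pm v"
  using pcong.rel[of u v "[]" "[]"] by (simp add: pm.abs_eq_iff)

lemma bxy: "letter B * (letter X * letter Y) = (letter X * letter Y) * letter B"
  using rel_pm[of "[B,X,Y]" "[X,Y,B]"] by (simp add: letter_abs times_abs rels_def)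

lemma byx: "letter B * (letter Y * letter X) = (letter Y * letter X) * letter B"
  using rel_pm[of "[B,Y,X]" "[Y,X,B]"] by (simp add: letter_abs times_abs rels_def)

lemma axyb: "letter A * (letter X * letter Y) * letter B = letter B * (letter Y * letter X) * letter A"
  using rel_pm[of "[A,X,Y,B]" "[B,Y,X,A]"] by (simp add: letter_abs times_abs rels_def)

lemma comm_pow: "(b::'a::monoid_mult) * c = c * b \<Longrightarrow> b * c ^ n = c ^ n * b"
  by (induction n) (simp_all add: mult.assoc[symmetric], metis mult.assoc)

lemma conn_step:
  fixes k m :: nat
  defines "xy \<equiv> letter X * letter Y" and "yx \<equiv> letter Y * letter X"
  shows "cyc_shift (yx ^ k * letter A * xy ^ Suc m * letter B) (yx ^ Suc k * letter A * xy ^ m * letter B)"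
proof -
  have b1: "letter B * xy ^ m = xy ^ m * letter B" using comm_pow[OF bxy] unfolding xy_def by blast
  have b2: "letter B * yx ^ k = yx ^ k * letter B" using comm_pow[OF byx] unfolding yx_def by blast
  have sw: "letter A * xy * letter B = letter B * yx * letter A" using axyb unfolding xy_def yx_def .
  have "yx ^ k * letter A * xy ^ Suc m * letter B = yx ^ k * letter A * xy * (xy ^ m * letter B)"
    by (simp add: mult.assoc)
  also have "\<dots> = yx ^ k * (letter A * xy * letter B) * xy ^ m"
    by (simp add: b1[symmetric] mult.assoc)
  also have "\<dots> = (yx ^ k * letter B) * yx * letter A * xy ^ m"
    by (subst sw) (simp add: mult.assoc)
  also have "\<dots> = letter B * (yx ^ Suc k * letter A * xy ^ m)"
    by (simp del: power_Suc add: b2[symmetric] mult.assoc power_Suc2)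
  finally show ?thesis unfolding cyc_shift_def by (metis mult.assoc)
qed

lemma conn_all:
  fixes \<alpha> :: nat
  defines "xy \<equiv> letter X * letter Y" and "yx \<equiv> letter Y * letter X"
  shows "k \<le> \<alpha> \<Longrightarrow> K_conn (letter A * xy ^ \<alpha> * letter B) (yx ^ k * letter A * xy ^ (\<alpha> - k) * letter B)"
proof (induction k)
  case 0
  then show ?case unfolding K_conn_def by simp
next
  case (Suc k)
  then obtain m where m: "\<alpha> - k = Suc m" "\<alpha> - Suc k = m" by (metis Suc_diff_Suc Suc_le_lessD diff_Suc_1)
  have "cyc_shift (yx ^ k * letter A * xy ^ (\<alpha> - k) * letter B) (yx ^ Suc k * letter A * xy ^ (\<alpha> - Suc k) * letter B)"
    unfolding m xy_def yx_def by (rule conn_step)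
  then show ?case using Suc unfolding K_conn_def by (meson Suc_leD rtranclp.rtrancl_into_rtrancl)
qed

lemma conn_main: "K_conn (letter A * (letter X * letter Y) ^ \<alpha> * letter B)
                   (letter B * (letter Y * letter X) ^ \<alpha> * letter A)"
proof -
  have 1: "K_conn (letter A * (letter X * letter Y) ^ \<alpha> * letter B) ((letter Y * letter X) ^ \<alpha> * letter A * letter B)"
    using conn_all[of \<alpha> \<alpha>] by simp
  have "cyc_shift ((letter Y * letter X) ^ \<alpha> * letter A * letter B) (letter B * (letter Y * letter X) ^ \<alpha> * letter A)"
    unfolding cyc_shift_def by (metis mult.assoc)
  then show ?thesis using 1 unfolding K_conn_def by (meson rtranclp.rtrancl_into_rtrancl)
qed

lemma rep_set: "set (concat (replicate n w)) \<subseteq> set w"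
  by (induction n) auto

lemma rep_len: "length (concat (replicate n w)) = n * length w"
  by (induction n) auto

lemma pc_xy: "pc (concat (replicate n [X,Y])) = 0"
  by (induction n) auto

lemma pc_yx: "pc (concat (replicate n [Y,X])) = n"
  by (induction n) auto

lemma F_start: "F (letter A * (letter X * letter Y) ^ \<alpha> * letter B) = 0"
proof -
  let ?z = "concat (replicate \<alpha> [X,Y])"
  have e: "letter A * (letter X * letter Y) ^ \<alpha> * letter B = abs_pm ([] @ A # (?z @ [B]))"
    by (simp add: letter_abs times_abs pow_abs)
  have nA: "A \<notin> set ?z" "B \<notin> set ?z" using rep_set[of \<alpha> "[X,Y]"] by auto
  have xz: "xyf ?z = ?z" using nA by (rule xyf_id)
  have "fcond ([] @ A # (?z @ [B]))" unfolding fcond_def using nA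
    by (simp add: rep_len count_notin[symmetric])
  then have "f ([] @ A # (?z @ [B])) = 0" using fA[of "[]" "?z @ [B]"] xz
    by (simp add: xyf_def pc_xy)
  then show ?thesis unfolding e by (simp add: F.abs_eq)
qed

lemma F_target: "F (letter B * (letter Y * letter X) ^ \<alpha> * letter A) = int \<alpha> - 1"
proof -
  let ?z = "concat (replicate \<alpha> [Y,X])"
  have e: "letter B * (letter Y * letter X) ^ \<alpha> * letter A = abs_pm ((B # ?z) @ A # [])"
    by (simp add: letter_abs times_abs pow_abs)
  have nA: "A \<notin> set ?z" "B \<notin> set ?z" using rep_set[of \<alpha> "[Y,X]"] by auto
  have xz: "xyf ?z = ?z" using nA by (rule xyf_id)
  have "fcond ((B # ?z) @ A # [])" unfolding fcond_def using nA
    by (simp add: rep_len count_notin[symmetric])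
  then have "f ((B # ?z) @ A # []) = int \<alpha> - 1" using fA[of "B # ?z" "[]"] xz nA
    by (simp add: xyf_def pc_yx)
  then show ?thesis unfolding e by (simp add: F.abs_eq)
qed

lemma dist_main: "K_dist (letter A * (letter X * letter Y) ^ \<alpha> * letter B)
                   (letter B * (letter Y * letter X) ^ \<alpha> * letter A) \<ge> enat (\<alpha> - 1)"
  unfolding K_dist_def
proof (rule INF_greatest)
  fix n assume "n \<in> {n. (cyc_shift ^^ n) (letter A * (letter X * letter Y) ^ \<alpha> * letter B)
                   (letter B * (letter Y * letter X) ^ \<alpha> * letter A)}"
  then have "\<bar>0 - (int \<alpha> - 1)\<bar> \<le> int n" using F_pow F_start F_target by fastforce
  then show "enat (\<alpha> - 1) \<le> enat n" by simp
qed

theorem mainTheorem15: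
  shows "(\<forall>\<alpha>::nat.
            K_conn (letter A * (letter X * letter Y) ^ \<alpha> * letter B)
                   (letter B * (letter Y * letter X) ^ \<alpha> * letter A)
          \<and> K_dist (letter A * (letter X * letter Y) ^ \<alpha> * letter B)
                   (letter B * (letter Y * letter X) ^ \<alpha> * letter A) \<ge> enat (\<alpha> - 1))
       \<and> multihomogeneous_pres rels
       \<and> \<not> (\<exists>N::nat. \<forall>s::pm. K_comp_diam s \<le> enat N)"
proof (intro conjI allI notI)
  fix \<alpha> :: nat
  show "K_conn (letter A * (letter X * letter Y) ^ \<alpha> * letter B)
                   (letter B * (letter Y * letter X) ^ \<alpha> * letter A)" by (rule conn_main)
  show "K_dist (letter A * (letter X * letter Y) ^ \<alpha> * letter B)
                   (letter B * (letter Y * letter X) ^ \<alpha> * letter A) \<ge> enat (\<alpha> - 1)" by (rule dist_main)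
next
  show "multihomogeneous_pres rels"
    unfolding multihomogeneous_pres_def rels_def by auto
next
  assume "\<exists>N::nat. \<forall>s::pm. K_comp_diam s \<le> enat N"
  then obtain N where N: "\<And>s::pm. K_comp_diam s \<le> enat N" by blast
  let ?s = "letter A * (letter X * letter Y) ^ (N + 2) * letter B"
  let ?t = "letter B * (letter Y * letter X) ^ (N + 2) * letter A"
  have "(?s, ?t) \<in> {u. K_conn ?s u} \<times> {u. K_conn ?s u}"
    using conn_main[of "N+2"] by (simp add: K_conn_def)
  then have "K_dist ?s ?t \<le> K_comp_diam ?s"
    unfolding K_comp_diam_def by (metis (no_types, lifting) SUP_upper fst_conv snd_conv)
  moreover have "enat (N + 1) \<le> K_dist ?s ?t" using dist_main[of "N+2"] by simp
  ultimately have "enat (N + 1) \<le> enat N" using N[of ?s] by (meson order_trans)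
  then show False by simp
qed

end
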